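(* Let $f:[0,1]\to\mathbb{R}$ be a $C^2$ function such that $f'(0)\ge0$, $\inf f''>0$, $f'''$ exists and is bounded on $(0,1)$, and $f'f'''-(f'')^2\le0$ on $(0,1)$. There is a constant $C$ depending only on $f$ such that for all $M\in4\mathbb{N}$ sufficiently large depending on $f$, all $a_0\in[1,2]$ and $\delta_0\in(0,2-a_0]$, the set $F_M$ defined below satisfies $|F_M|\le C\delta_0M^{-2}$.
   Context: Fix $a_0\in[1,2]$, $\delta_0\in(0,2-a_0]$, $M\in4\mathbb{N}$, $m=M/2$, $a_n:=a_0+n\delta_02^{-M}$ for $n=0,\dots,2^M-1$, and $x_j:=2j/M$. Let $T_n:=\{(x,af(x)):x\in[0,1],\ a\in[a_n,a_n+\delta_02^{-M}]\}$. For $j\in\{1,\dots,m-1\}$ and each $n$ of the form $n=2^jk+2^{j-1}$ ($k=0,\dots,2^{M-j}-1$), let $(u_n^{(j)},v_n^{(j)})$ be the solution (with $x_j-u_n^{(j)}\in[0,1]$; it exists and is unique for $M$ large) of $$a_nf(x_j-u)+v=a_{n-2^{j-1}}f(x_j),\qquad a_nf'(x_j-u)=a_{n-2^{j-1}}f'(x_j).$$ For $n=\sum_{i=1}^M\varepsilon_i(n)2^{i-1}$ (binary expansion, $\varepsilon_i(n)\in\{0,1\}$) let $\lfloor n\rfloor_i:=n-(n\bmod2^{i-1})$, and set $u_n:=\sum_{i=1}^{m-1}\varepsilon_i(n)u^{(i)}_{\lfloor n\rfloor_i}$, $v_n:=\sum_{i=1}^{m-1}\varepsilon_i(n)v^{(i)}_{\lfloor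 n\rfloor_i}$ (the total translation of $T_n$ in the cut-and-slide construction, where at step $j$ the union of the already-grouped pieces with bottom curve $a_nf$ is translated so that this bottom curve becomes tangent at $x_j$ to the bottom curve $a_{n-2^{j-1}}f$). Define $$F_M:=\Big(\bigcup_{n=0}^{2^M-1}\big(T_n+(u_n,v_n)\big)\Big)\cap\Big(\Big[\tfrac{4\log_2M}{M},1\Big]\times\mathbb{R}\Big).$$ $|\cdot|$ denotes two-dimensional Lebesgue measure. *)

theory Defs
  imports "HOL-Analysis.Analysis"
begin

definition aseq :: "real \<Rightarrow> real \<Rightarrow> nat \<Rightarrow> nat \<Rightarrow> real" where
  "aseq a0 d0 M n = a0 + real n * d0 / 2 ^ M"

definition xpt :: "nat \<Rightarrow> nat \<Rightarrow> real" where
  "xpt M j = 2 * real j / real M"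

definition Tpiece :: "(real \<Rightarrow> real) \<Rightarrow> real \<Rightarrow> real \<Rightarrow> nat \<Rightarrow> nat \<Rightarrow> (real \<times> real) set" where
  "Tpiece f a0 d0 M n =
     {(x, a * f x) | x a. x \<in> {0..1} \<and> a \<in> {aseq a0 d0 M n .. aseq a0 d0 M n + d0 / 2 ^ M}}"

text \<open>The pair (u_n^(j), v_n^(j)): the unique solution with x_j - u in [0,1] of
  a_n f(x_j - u) + v = a_(n - 2^(j-1)) f(x_j),  a_n f'(x_j - u) = a_(n - 2^(j-1)) f'(x_j).
  Here f1 is the derivative f'.\<close>
definition uvstep :: "(real \<Rightarrow> real) \<Rightarrow> (real \<Rightarrow> real) \<Rightarrow> real \<Rightarrow> real \<Rightarrow> nat \<Rightarrow> nat \<Rightarrow> nat \<Rightarrow> real \<times> real" where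
  "uvstep f f1 a0 d0 M j n =
     (THE p. xpt M j - fst p \<in> {0..1} \<and>
        aseq a0 d0 M n * f (xpt M j - fst p) + snd p = aseq a0 d0 M (n - 2 ^ (j - 1)) * f (xpt M j) \<and>
        aseq a0 d0 M n * f1 (xpt M j - fst p) = aseq a0 d0 M (n - 2 ^ (j - 1)) * f1 (xpt M j))"

definition bdigit :: "nat \<Rightarrow> nat \<Rightarrow> nat" where
  "bdigit i n = (n div 2 ^ (i - 1)) mod 2"

definition btrunc :: "nat \<Rightarrow> nat \<Rightarrow> nat" where
  "btrunc i n = n - n mod 2 ^ (i - 1)"

definition utot :: "(real \<Rightarrow> real) \<Rightarrow> (real \<Rightarrow> real) \<Rightarrow> real \<Rightarrow> real \<Rightarrow> nat \<Rightarrow> nat \<Rightarrow> real" where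
  "utot f f1 a0 d0 M n =
     (\<Sum>i\<in>{1..<M div 2}. real (bdigit i n) * fst (uvstep f f1 a0 d0 M i (btrunc i n)))"

definition vtot :: "(real \<Rightarrow> real) \<Rightarrow> (real \<Rightarrow> real) \<Rightarrow> real \<Rightarrow> real \<Rightarrow> nat \<Rightarrow> nat \<Rightarrow> real" where
  "vtot f f1 a0 d0 M n =
     (\<Sum>i\<in>{1..<M div 2}. real (bdigit i n) * snd (uvstep f f1 a0 d0 M i (btrunc i n)))"

definition FM :: "(real \<Rightarrow> real) \<Rightarrow> (real \<Rightarrow> real) \<Rightarrow> real \<Rightarrow> real \<Rightarrow> nat \<Rightarrow> (real \<times> real) set" where
  "FM f f1 a0 d0 M =
     (\<Union>n\<in>{0..<2 ^ M}. (\<lambda>p. p + (utot f f1 a0 d0 M n, vtot f f1 a0 d0 M n)) ` Tpiece f a0 d0 M n)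
     \<inter> ({4 * log 2 (real M) / real M .. 1} \<times> UNIV)"

end

theory Submission
  imports Defs "HOL-Analysis.Analysis"
begin


locale anal =
  fixes f f1 f2 f3 :: "real \<Rightarrow> real" and c B0 B1 B2 B3 :: real
  assumes d1: "\<And>x. x \<in> {0..1} \<Longrightarrow> (f has_real_derivative f1 x) (at x within {0..1})"
      and d2: "\<And>x. x \<in> {0..1} \<Longrightarrow> (f1 has_real_derivative f2 x) (at x within {0..1})"
      and c2: "continuous_on {0..1} f2"
      and f1_0: "f1 0 \<ge> 0"
      and cpos: "c > 0"
      and f2c: "\<And>x. x\<in>{0..1} \<Longrightarrow> f2 x \<ge> c"
      and d3: "\<And>x. x \<in> {0<..<1} \<Longrightarrow> (f2 has_real_derivative f3 x) (at x)"
      and f3b: "\<And>x. x\<in>{0<..<1} \<Longrightarrow> \<bar>f3 x\<bar> \<le> B3"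
      and fB0: "\<And>x. x\<in>{0..1} \<Longrightarrow> \<bar>f x\<bar> \<le> B0"
      and fB1: "\<And>x. x\<in>{0..1} \<Longrightarrow> \<bar>f1 x\<bar> \<le> B1"
      and fB2: "\<And>x. x\<in>{0..1} \<Longrightarrow> \<bar>f2 x\<bar> \<le> B2"
      and B0nn: "B0 \<ge> 0" and B1nn: "B1 \<ge> 0" and B2nn: "B2 \<ge> 0" and B3nn: "B3 \<ge> 0"
begin

lemma f_lip:
  assumes "x \<in> {0..1}" "y \<in> {0..1}"
  shows "\<bar>f x - f y\<bar> \<le> B1 * \<bar>x - y\<bar>"
  using field_differentiable_bound[of "{0..1}" f f1 B1 x y] d1 fB1 assms
  by (auto simp: convex_real_interval)

lemma f1_lower:
  assumes "0 \<le> s" "s \<le> t" "t \<le> 1"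
  shows "c * (t - s) \<le> f1 t - f1 s"
proof -
  have "\<And>x. s \<le> x \<Longrightarrow> x \<le> t \<Longrightarrow> (f1 has_derivative (*) (f2 x)) (at x within {s..t})"
    using assms by (intro has_field_derivative_imp_has_derivative DERIV_subset[OF d2]) auto
  from mvt_very_simple[OF assms(2) this] obtain x where x: "x \<in> {s..t}" "f1 t - f1 s = f2 x * (t - s)"
    by blast
  have "f2 x \<ge> c" using x assms by (intro f2c) auto
  with x assms show ?thesis by (simp add: mult_right_mono)
qed

lemma f1_strict:
  assumes "0 \<le> s" "s < t" "t \<le> 1"
  shows "f1 s < f1 t"
  using f1_lower[of s t] assms cpos by (smt (verit) mult_pos_pos)

lemma f1_cont: "continuous_on {0..1} f1"
  unfolding continuous_on_eq_continuous_within
proof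
  fix x :: real assume "x \<in> {0..1}"
  then show "continuous (at x within {0..1}) f1" by (rule DERIV_continuous[OF d2])
qed

lemma f_cont: "continuous_on {0..1} f"
  unfolding continuous_on_eq_continuous_within
proof
  fix x :: real assume "x \<in> {0..1}"
  then show "continuous (at x within {0..1}) f" by (rule DERIV_continuous[OF d1])
qed

lemma f2_lip:
  assumes "0 \<le> s" "s \<le> t" "t \<le> 1"
  shows "\<bar>f2 t - f2 s\<bar> \<le> B3 * (t - s)"
proof (cases "s = t")
  case True then show ?thesis by simp
next
  case False
  then have st: "s < t" using assms by simp
  have "continuous_on {s..t} f2" using c2 by (rule continuous_on_subset) (use assms in auto)
  moreover have "f2 differentiable at x" if "s < x" "x < t" for x
  proof -
    have "(f2 has_real_derivative f3 x) (at x)" using that assms by (intro d3) auto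
    then show ?thesis by (metis differentiableI has_field_derivative_imp_has_derivative)
  qed
  ultimately obtain l z where z: "s < z" "z < t" "(f2 has_real_derivative l) (at z)" "f2 t - f2 s = (t - s) * l"
    using MVT[OF st] by blast
  have "l = f3 z" using z assms d3[of z] by (auto intro: DERIV_unique)
  then have "\<bar>l\<bar> \<le> B3" using f3b[of z] z assms by auto
  then show ?thesis using z st by (simp add: abs_mult mult.commute mult_left_mono)
qed

definition "Kc = B2 + 2 * B3 * B1 / c"

lemma shift_deriv:
  fixes g g' :: "real \<Rightarrow> real"
  assumes dg: "\<And>x. x \<in> {0..1} \<Longrightarrow> (g has_real_derivative g' x) (at x within {0..1})"
    and t: "t \<in> {u..1}" and u: "0 \<le> u"
  shows "((\<lambda>t. g (t - u)) has_real_derivative g' (t - u)) (at t within {u..1})"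
proof -
  have sub: "(\<lambda>t. t - u) ` {u..1} \<subseteq> {0..1}" using u by auto
  have "(g has_real_derivative g' (t - u)) (at (t - u) within (\<lambda>t. t - u) ` {u..1})"
    using t u by (intro DERIV_subset[OF dg sub]) auto
  moreover have "((\<lambda>t. t - u) has_real_derivative 1) (at t within {u..1})"
    by (auto intro!: derivative_eq_intros)
  ultimately have "(g \<circ> (\<lambda>t. t - u) has_real_derivative g' (t - u) * 1) (at t within {u..1})"
    by (rule DERIV_image_chain)
  then show ?thesis by (simp add: o_def)
qed

lemma tangent_dev:
  assumes u0: "0 \<le> u" and uxi: "u \<le> xi" and xi1: "xi \<le> 1" and ap: "0 \<le> a'" "a' \<le> 2"
    and dl: "0 \<le> \<Delta>" and ub: "u \<le> \<Delta> * B1 / c"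
    and e1: "(a' + \<Delta>) * f (xi - u) + v = a' * f xi"
    and e2: "(a' + \<Delta>) * f1 (xi - u) = a' * f1 xi"
    and Z: "u \<le> Z" "Z \<le> 1"
  shows "\<bar>(a' + \<Delta>) * f (Z - u) + v - a' * f Z\<bar> \<le> \<Delta> * Kc * (Z - xi)\<^sup>2"
proof -
  define S where "S = {u..1}"
  define D where "D t = (a' + \<Delta>) * f (t - u) + v - a' * f t" for t
  define D1 where "D1 t = (a' + \<Delta>) * f1 (t - u) - a' * f1 t" for t
  define D2 where "D2 t = (a' + \<Delta>) * f2 (t - u) - a' * f2 t" for t
  have S01: "S \<subseteq> {0..1}" using u0 by (auto simp: S_def)
  have dD: "(D has_real_derivative D1 t) (at t within S)" if t: "t \<in> S" for t
  proof -
    have "((\<lambda>t. f (t - u)) has_real_derivative f1 (t - u)) (at t within S)"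
      unfolding S_def by (rule shift_deriv[OF d1]) (use t u0 in \<open>auto simp: S_def\<close>)
    moreover have "(f has_real_derivative f1 t) (at t within S)"
      using t S01 by (intro DERIV_subset[OF d1]) auto
    ultimately show ?thesis unfolding D_def D1_def
      by (auto intro!: derivative_eq_intros)
  qed
  have dD1: "(D1 has_real_derivative D2 t) (at t within S)" if t: "t \<in> S" for t
  proof -
    have "((\<lambda>t. f1 (t - u)) has_real_derivative f2 (t - u)) (at t within S)"
      unfolding S_def by (rule shift_deriv[OF d2]) (use t u0 in \<open>auto simp: S_def\<close>)
    moreover have "(f1 has_real_derivative f2 t) (at t within S)"
      using t S01 by (intro DERIV_subset[OF d2]) auto
    ultimately show ?thesis unfolding D1_def D2_def
      by (auto intro!: derivative_eq_intros)
  qed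
  have bD2: "\<bar>D2 t\<bar> \<le> \<Delta> * Kc" if t: "t \<in> S" for t
  proof -
    have t01: "0 \<le> t - u" "t \<le> 1" using t by (auto simp: S_def)
    have h1: "\<bar>f2 (t - u)\<bar> \<le> B2" using t01 u0 by (intro fB2) auto
    have h2: "\<bar>f2 t - f2 (t - u)\<bar> \<le> B3 * u" using f2_lip[of "t - u" t] t01 u0 by simp
    have D2e: "D2 t = \<Delta> * f2 (t - u) - a' * (f2 t - f2 (t - u))" unfolding D2_def by algebra
    then have "\<bar>D2 t\<bar> \<le> \<Delta> * \<bar>f2 (t - u)\<bar> + a' * \<bar>f2 t - f2 (t - u)\<bar>"
    proof -
      have "\<bar>\<Delta> * f2 (t - u) - a' * (f2 t - f2 (t - u))\<bar> \<le> \<bar>\<Delta> * f2 (t - u)\<bar> + \<bar>a' * (f2 t - f2 (t - u))\<bar>"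
        by (rule abs_triangle_ineq4)
      also have "\<dots> = \<Delta> * \<bar>f2 (t - u)\<bar> + a' * \<bar>f2 t - f2 (t - u)\<bar>"
        using dl ap by (simp add: abs_mult)
      finally show ?thesis using D2e by simp
    qed
    also have "\<dots> \<le> \<Delta> * B2 + 2 * (B3 * u)"
      using h1 h2 dl ap by (intro add_mono mult_mono mult_left_mono) auto
    also have "\<dots> \<le> \<Delta> * B2 + 2 * (B3 * (\<Delta> * B1 / c))"
      using ub B3nn by (intro add_left_mono mult_left_mono) auto
    also have "\<dots> = \<Delta> * Kc" unfolding Kc_def by (simp add: algebra_simps)
    finally show ?thesis .
  qed
  have xiS: "xi \<in> S" using uxi xi1 by (auto simp: S_def)
  have D1xi: "D1 xi = 0" using e2 by (simp add: D1_def)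
  have Dxi: "D xi = 0" using e1 by (simp add: D_def)
  have bD1: "\<bar>D1 t\<bar> \<le> \<Delta> * Kc * \<bar>t - xi\<bar>" if t: "t \<in> S" for t
    using field_differentiable_bound[of S D1 D2 "\<Delta> * Kc" t xi] dD1 bD2 t xiS D1xi
    by (auto simp: S_def convex_real_interval)
  define I where "I = {min Z xi .. max Z xi}"
  have IS: "I \<subseteq> S" using Z xiS by (auto simp: I_def S_def)
  have "\<bar>D Z - D xi\<bar> \<le> (\<Delta> * Kc * \<bar>Z - xi\<bar>) * \<bar>Z - xi\<bar>"
  proof (rule field_differentiable_bound[of I D D1, simplified])
    show "convex I" by (simp add: I_def convex_real_interval)
    show "(D has_real_derivative D1 t) (at t within I)" if "t \<in> I" for t
      using dD[of t] that IS by (auto intro: DERIV_subset)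
    show "\<bar>D1 t\<bar> \<le> \<Delta> * Kc * \<bar>Z - xi\<bar>" if "t \<in> I" for t
    proof -
      have "\<bar>t - xi\<bar> \<le> \<bar>Z - xi\<bar>" using that by (auto simp: I_def)
      moreover have "\<Delta> * Kc \<ge> 0" using bD2[OF xiS] by linarith
      ultimately have "\<Delta> * Kc * \<bar>t - xi\<bar> \<le> \<Delta> * Kc * \<bar>Z - xi\<bar>" by (rule mult_left_mono)
      then show ?thesis using bD1[of t] that IS by auto
    qed
    show "Z \<in> I" "xi \<in> I" by (auto simp: I_def)
  qed
  then show ?thesis using Dxi by (simp add: D_def power2_eq_square abs_mult_self mult.assoc)
qed

end


locale constr = anal +
  fixes M :: nat and a0 d0 :: real
  assumes M4: "4 dvd M" and M8: "M \<ge> 8" and a01: "1 \<le> a0" and d0p: "0 < d0" and a0d0: "a0 + d0 \<le> 2"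
    and large: "B1 * real M \<le> 2 * c * 2 ^ (M div 2)"
begin

abbreviation "m \<equiv> M div 2"
abbreviation "h \<equiv> d0 / 2 ^ M"
abbreviation "A \<equiv> aseq a0 d0 M"
abbreviation "xx \<equiv> xpt M"
abbreviation "uv \<equiv> uvstep f f1 a0 d0 M"

lemma M2m: "M = 2 * m" using M4 by auto

lemma pow_M: "(2::real) ^ M = 2 ^ m * 2 ^ m"
  by (subst M2m) (simp add: power_add mult_2)

lemma d01: "d0 \<le> 1" using a01 a0d0 by simp

lemma hpos: "h > 0" using d0p by simp

lemma aseq_eq: "A n = a0 + real n * h" by (simp add: aseq_def)

lemma aseq_bounds:
  assumes "n < 2 ^ M"
  shows "1 \<le> A n" "A n + h \<le> 2"
proof -
  have "real n + 1 \<le> 2 ^ M" using assms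
    by (metis Suc_eq_plus1 Suc_leI of_nat_1 of_nat_add of_nat_le_iff of_nat_numeral of_nat_power)
  then have "(real n + 1) * h \<le> 2 ^ M * h" using hpos by (intro mult_right_mono) auto
  moreover have "real n * h + h = (real n + 1) * h" by algebra
  moreover have "2 ^ M * h = d0" by simp
  ultimately have "real n * h + h \<le> d0" by simp
  then show "A n + h \<le> 2" using a0d0 by (simp add: aseq_eq)
  have "0 \<le> real n * h" using d0p by simp
  then show "1 \<le> A n" using a01 by (simp add: aseq_eq)
qed

lemma aseq_sub:
  assumes "k \<le> n"
  shows "A (n - k) = A n - real k * h"
  using assms by (simp add: aseq_eq of_nat_diff algebra_simps diff_divide_distrib)

lemma xx_eq: "xx j = 2 * real j / real M" by (simp add: xpt_def)

lemma uv_props: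
  assumes j1: "1 \<le> j" and jm: "j < m" and bj: "2 ^ (j - 1) \<le> b" and bM: "b < 2 ^ M"
  defines "u \<equiv> fst (uv j b)" and "v \<equiv> snd (uv j b)"
  shows "0 \<le> u" "u \<le> xx j" "xx j \<le> 1" "u \<le> (2 ^ (j - 1) * h) * B1 / c"
    "A b * f (xx j - u) + v = A (b - 2 ^ (j - 1)) * f (xx j)"
    "A b * f1 (xx j - u) = A (b - 2 ^ (j - 1)) * f1 (xx j)"
proof -
  define xi where "xi = xx j"
  define a where "a = A b"
  define a' where "a' = A (b - 2 ^ (j - 1))"
  define \<Delta> where "\<Delta> = 2 ^ (j - 1) * h"
  have Mpos: "real M > 0" using M8 by simp
  have xi0: "0 < xi" using j1 Mpos by (simp add: xi_def xx_eq)
  have "2 * j < M" using jm M2m by linarith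
  then have "2 * real j < real M" by linarith
  then have xi1: "xi < 1" using Mpos by (simp add: xi_def xx_eq)
  have aa': "a = a' + \<Delta>" using aseq_sub[OF bj] by (simp add: a_def a'_def \<Delta>_def)
  have a'1: "1 \<le> a'" using aseq_bounds(1)[of "b - 2 ^ (j - 1)"] bM by (simp add: a'_def)
  have a2: "a \<le> 2" using aseq_bounds(2)[OF bM] hpos by (simp add: a_def)
  have dpos: "0 \<le> \<Delta>" using d0p by (simp add: \<Delta>_def)
  have apos: "1 \<le> a" using a'1 dpos aa' by simp
  have "(2::real) ^ (j - 1) \<le> 2 ^ m" by (rule power_increasing) (use jm in auto)
  then have "2 ^ (j - 1) * d0 \<le> 2 ^ m * 1" using d01 d0p
    by (intro mult_mono) auto
  then have "\<Delta> \<le> 2 ^ m * 1 / 2 ^ M" unfolding \<Delta>_def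
    by (simp add: divide_right_mono)
  then have dsmall: "\<Delta> \<le> 1 / 2 ^ m" by (simp add: pow_M)
  have f1xi: "c * xi \<le> f1 xi - f1 0" using f1_lower[of 0 xi] xi0 xi1 by simp
  have f1xi0: "0 \<le> f1 xi" using f1xi f1_0 cpos xi0 by (smt (verit) mult_pos_pos)
  have f10B: "f1 0 \<le> B1" using fB1[of 0] by simp
  have cxi: "2 * c / real M \<le> c * xi"
  proof -
    have "2 / real M \<le> xi" using j1 Mpos by (simp add: xi_def xx_eq divide_right_mono)
    then have "c * (2 / real M) \<le> c * xi" using cpos by (intro mult_left_mono) auto
    then show ?thesis by (simp add: mult.commute)
  qed
  have "\<Delta> * B1 \<le> (1 / 2 ^ m) * B1" using dsmall B1nn by (rule mult_right_mono)
  then have "\<Delta> * B1 \<le> B1 / 2 ^ m" by simp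
  also have "\<dots> \<le> 2 * c / real M" using large Mpos by (simp add: field_simps)
  finally have dB: "\<Delta> * B1 \<le> c * xi" using cxi by simp
  define \<tau> where "\<tau> = a' * f1 xi / a"
  have "a' * f1 xi \<le> a * f1 xi"
  proof -
    have "0 \<le> \<Delta> * f1 xi" using dpos f1xi0 by simp
    then show ?thesis using aa' by (simp add: distrib_right)
  qed
  then have tau1: "\<tau> \<le> f1 xi"
    using apos by (simp add: \<tau>_def divide_le_eq mult.commute)
  have "a * f1 0 \<le> a' * f1 xi"
  proof -
    have "a' * f1 xi - a * f1 0 = a' * (f1 xi - f1 0) - \<Delta> * f1 0" using aa' by algebra
    moreover have "a' * (f1 xi - f1 0) \<ge> f1 xi - f1 0" using a'1 f1xi cpos xi0
      by (smt (verit, best) mult_le_cancel_right1 mult_pos_pos)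
    moreover have "\<Delta> * f1 0 \<le> \<Delta> * B1" using dpos f10B by (simp add: mult_left_mono)
    ultimately show ?thesis using f1xi dB by linarith
  qed
  then have tau0: "f1 0 \<le> \<tau>" using apos by (simp add: \<tau>_def le_divide_eq mult.commute)
  have "continuous_on {0..xi} f1" using f1_cont by (rule continuous_on_subset) (use xi1 in auto)
  from IVT'[of f1 0 \<tau> xi, OF tau0 tau1 _ this] xi0 obtain t where t: "0 \<le> t" "t \<le> xi" "f1 t = \<tau>"
    by auto
  define P where "P p \<longleftrightarrow> xi - fst p \<in> {0..1} \<and> a * f (xi - fst p) + snd p = a' * f xi \<and>
        a * f1 (xi - fst p) = a' * f1 xi" for p :: "real \<times> real"
  define p0 where "p0 = (xi - t, a' * f xi - a * f t)"
  have Pp0: "P p0" using t xi1 apos by (simp add: P_def p0_def \<tau>_def)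
  have uniq: "p = p0" if "P p" for p
  proof -
    define t' where "t' = xi - fst p"
    have t': "0 \<le> t'" "t' \<le> 1" "a * f1 t' = a' * f1 xi" "a * f t' + snd p = a' * f xi"
      using that by (auto simp: P_def t'_def)
    have "a * f1 t = a' * f1 xi" using t apos by (simp add: \<tau>_def)
    then have "a * f1 t' = a * f1 t" using t' by simp
    then have "f1 t' = f1 t" using apos by simp
    have "t' = t"
    proof (rule ccontr)
      assume "t' \<noteq> t"
      then consider "t' < t" | "t < t'" by linarith
      then show False
      proof cases
        case 1 then have "f1 t' < f1 t" using t' t xi1 by (intro f1_strict) auto
        then show False using \<open>f1 t' = f1 t\<close> by simp
      next
        case 2 then have "f1 t < f1 t'" using t' t xi1 by (intro f1_strict) auto
        then show False using \<open>f1 t' = f1 t\<close> by simp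
      qed
    qed
    then show ?thesis using t' by (simp add: p0_def prod_eq_iff t'_def)
  qed
  have "uv j b = (THE p. P p)"
    unfolding uvstep_def P_def a_def a'_def xi_def by (rule refl)
  also have "(THE p. P p) = p0" by (rule the_equality[where P=P, OF Pp0 uniq])
  finally have uvp: "uv j b = p0" .
  have u_eq: "u = xi - t" and v_eq: "v = a' * f xi - a * f t"
    by (simp_all add: u_def v_def uvp p0_def)
  show "0 \<le> u" "u \<le> xx j" "xx j \<le> 1" using t xi1 by (simp_all add: u_eq xi_def)
  show "A b * f (xx j - u) + v = A (b - 2 ^ (j - 1)) * f (xx j)"
    by (simp add: u_eq v_eq a_def a'_def xi_def)
  show "A b * f1 (xx j - u) = A (b - 2 ^ (j - 1)) * f1 (xx j)"
    using t apos by (simp add: u_eq a_def a'_def xi_def \<tau>_def)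
  have "c * u \<le> f1 xi - f1 t" using f1_lower[of t xi] t xi1 by (simp add: u_eq)
  also have "a * (f1 xi - f1 t) = \<Delta> * f1 xi" using t apos aa' by (simp add: \<tau>_def field_simps)
  then have "f1 xi - f1 t \<le> \<Delta> * B1"
  proof -
    assume e: "a * (f1 xi - f1 t) = \<Delta> * f1 xi"
    have nn: "0 \<le> f1 xi - f1 t" using f1_lower[of t xi] t xi1 cpos by (smt (verit) mult_nonneg_nonneg)
    have "f1 xi - f1 t \<le> a * (f1 xi - f1 t)" using apos nn by (simp add: mult_le_cancel_right1)
    also have "\<dots> \<le> \<Delta> * B1" using e dpos fB1[of xi] xi0 xi1 by (simp add: mult_left_mono)
    finally show ?thesis .
  qed
  finally show "u \<le> (2 ^ (j - 1) * h) * B1 / c" using cpos by (simp add: \<Delta>_def field_simps)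
qed

end


lemma bdigit_01: "bdigit i n = 0 \<or> bdigit i n = 1"
  unfolding bdigit_def by auto

lemma btrunc_eq: "btrunc i n = 2 ^ (i - 1) * (n div 2 ^ (i - 1))"
  unfolding btrunc_def by (simp add: minus_mod_eq_mult_div)

lemma btrunc_le: "btrunc i n \<le> n"
  unfolding btrunc_def by simp

lemma btrunc_ge: "bdigit i n = 1 \<Longrightarrow> 2 ^ (i - 1) \<le> btrunc i n"
  unfolding btrunc_eq bdigit_def
  by (metis mod_less mult_le_mono2 mult.right_neutral not_less_eq_eq One_nat_def zero_neq_one
       less_one not_less le_SucI le_zero_eq div_less Suc_leI mod_0 gr0I mult_0_right less_2_cases)

lemma bit_low:
  fixes g r j :: nat
  assumes "g mod 2 ^ Suc j = 0" "r < 2 ^ j"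
  shows "bdigit (Suc j) (g + r) = 0"
proof -
  obtain q where g: "g = 2 ^ Suc j * q" using assms(1) by (metis mod_0_imp_dvd dvdE)
  have "g + r = r + (2 * q) * 2 ^ j" unfolding g by (simp add: algebra_simps)
  then have "(g + r) div 2 ^ j = 2 * q + r div 2 ^ j" by simp
  then show ?thesis using assms(2) by (simp add: bdigit_def)
qed

lemma bit_high:
  fixes g r j :: nat
  assumes "g mod 2 ^ Suc j = 0" "r < 2 ^ j"
  shows "bdigit (Suc j) (g + 2 ^ j + r) = 1" "btrunc (Suc j) (g + 2 ^ j + r) = g + 2 ^ j"
    "(g + 2 ^ j) mod 2 ^ j = 0" "g mod 2 ^ j = 0"
proof -
  obtain q where g: "g = 2 ^ Suc j * q" using assms(1) by (metis mod_0_imp_dvd dvdE)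
  have e: "g + 2 ^ j + r = r + (2 * q + 1) * 2 ^ j" unfolding g by (simp add: algebra_simps)
  have "(g + 2 ^ j + r) div 2 ^ j = 2 * q + 1 + r div 2 ^ j"
    unfolding e using div_mult_self1[of "2 ^ j" r "2 * q + 1"] by simp
  then show "bdigit (Suc j) (g + 2 ^ j + r) = 1" using assms(2) by (simp add: bdigit_def)
  have "(g + 2 ^ j + r) mod 2 ^ j = r" unfolding e using assms(2) mod_mult_self1[of r "2 * q + 1" "2 ^ j"]
    by (simp only: mod_less)
  then show "btrunc (Suc j) (g + 2 ^ j + r) = g + 2 ^ j" by (simp add: btrunc_def)
  show "(g + 2 ^ j) mod 2 ^ j = 0" "g mod 2 ^ j = 0" unfolding g by (simp_all add: mult.assoc)
qed



lemma trunc_low: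
  fixes n k i :: nat
  assumes "1 \<le> i" "i \<le> k"
  shows "bdigit i (n - n mod 2 ^ k) = 0"
proof -
  define q where "q = n div 2 ^ k"
  have g: "n - n mod 2 ^ k = 2 ^ k * q" by (simp add: q_def minus_mod_eq_mult_div)
  have k: "k = (i - 1) + Suc (k - i)" using assms by simp
  have "2 ^ k * q = 2 ^ (i - 1) * (2 * (2 ^ (k - i) * q))"
    by (subst k) (simp add: power_add mult_ac)
  then have e2: "n - n mod 2 ^ k = 2 ^ (i - 1) * (2 * (2 ^ (k - i) * q))" using g by simp
  have "(n - n mod 2 ^ k) div 2 ^ (i - 1) = 2 * (2 ^ (k - i) * q)"
    unfolding e2 by (rule nonzero_mult_div_cancel_left) simp
  then show ?thesis by (simp add: bdigit_def)
qed

lemma trunc_high_div: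
  fixes n k i :: nat
  assumes "k < i"
  shows "(n - n mod 2 ^ k) div 2 ^ (i - 1) = n div 2 ^ (i - 1)"
proof -
  define q where "q = n div 2 ^ k"
  have g: "n - n mod 2 ^ k = 2 ^ k * q" by (simp add: q_def minus_mod_eq_mult_div)
  have p: "(2::nat) ^ (i - 1) = 2 ^ k * 2 ^ (i - 1 - k)" using assms by (simp flip: power_add)
  show ?thesis unfolding p g q_def by (simp add: div_mult2_eq)
qed

lemma trunc_high:
  fixes n k i :: nat
  assumes "k < i"
  shows "bdigit i (n - n mod 2 ^ k) = bdigit i n" "btrunc i (n - n mod 2 ^ k) = btrunc i n"
  using trunc_high_div[OF assms, of n] by (simp_all add: bdigit_def btrunc_eq)

lemma trunc_le: "(n::nat) - n mod 2 ^ k \<le> n" by simp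

lemma trunc_mod: "((n::nat) - n mod 2 ^ k) mod 2 ^ k = 0"
  by (simp add: minus_mod_eq_mult_div)

lemma trunc_add: "((n::nat) - n mod 2 ^ k) + n mod 2 ^ k = n" by simp

lemma geo_sum: "(\<Sum>i\<in>{1..j}. (2::real) ^ (i - 1)) = 2 ^ j - 1"
  by (induction j) (simp_all add: sum.cl_ivl_Suc)

lemma S_id: "(\<Sum>i\<in>{1..j}. (2::real) ^ (i - 1) * (real j + 1 - real i)\<^sup>2) = 6 * 2 ^ j - (real j ^ 2 + 4 * real j + 6)"
proof (induction j)
  case 0 then show ?case by simp
next
  case (Suc j)
  have "(\<Sum>i\<in>{1..Suc j}. (2::real) ^ (i - 1) * (real (Suc j) + 1 - real i)\<^sup>2) =
     (real j + 1)\<^sup>2 + (\<Sum>i\<in>{Suc 1..Suc j}. (2::real) ^ (i - 1) * (real (Suc j) + 1 - real i)\<^sup>2)"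
    by (subst sum.atLeast_Suc_atMost) auto
  also have "(\<Sum>i\<in>{Suc 1..Suc j}. (2::real) ^ (i - 1) * (real (Suc j) + 1 - real i)\<^sup>2) =
     (\<Sum>i\<in>{1..j}. (2::real) ^ i * (real j + 1 - real i)\<^sup>2)"
    by (subst sum.shift_bounds_cl_Suc_ivl) (simp add: algebra_simps)
  also have "\<dots> = 2 * (\<Sum>i\<in>{1..j}. (2::real) ^ (i - 1) * (real j + 1 - real i)\<^sup>2)"
    unfolding sum_distrib_left
    by (rule sum.cong) (auto simp: power_Suc[symmetric] simp del: power_Suc)
  finally show ?case using Suc.IH by (simp add: power2_eq_square algebra_simps)
qed

lemma pow_ge: "1 \<le> m \<Longrightarrow> 2 * m \<le> (2::nat) ^ m"
proof (induction m)
  case 0 then show ?case by simp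
next
  case (Suc m)
  then show ?case by (cases "m = 0") auto
qed

lemma pow_sq: "4 \<le> m \<Longrightarrow> m ^ 2 \<le> (2::nat) ^ m"
proof (induction m rule: dec_induct)
  case base then show ?case by simp
next
  case (step m)
  have "(Suc m)\<^sup>2 = m ^ 2 + 2 * m + 1" by (simp add: power2_eq_square)
  also have "\<dots> \<le> m ^ 2 + m ^ 2"
  proof -
    have "4 * m \<le> m * m" using step(1) by (rule mult_le_mono1)
    moreover have "1 \<le> m" using step(1) by simp
    ultimately show ?thesis unfolding power2_eq_square by linarith
  qed
  also have "\<dots> \<le> 2 ^ Suc m" using step(3) by simp
  finally show ?case .
qed



context constr begin

definition "Ulow j n = (\<Sum>i\<in>{1..j}. real (bdigit i n) * fst (uv i (btrunc i n)))"
definition "Vlow j n = (\<Sum>i\<in>{1..j}. real (bdigit i n) * snd (uv i (btrunc i n)))"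

lemma Kc_nn: "0 \<le> Kc"
  unfolding Kc_def using B2nn B3nn B1nn cpos by simp

lemma uvb:
  assumes "1 \<le> i" "i < m" "n < 2 ^ M" "bdigit i n = 1"
  shows "0 \<le> fst (uv i (btrunc i n))" "fst (uv i (btrunc i n)) \<le> 2 ^ (i - 1) * h * B1 / c"
proof -
  have "2 ^ (i - 1) \<le> btrunc i n" by (rule btrunc_ge[OF assms(4)])
  moreover have "btrunc i n < 2 ^ M" using btrunc_le[of i n] assms(3) by linarith
  ultimately show "0 \<le> fst (uv i (btrunc i n))" "fst (uv i (btrunc i n)) \<le> 2 ^ (i - 1) * h * B1 / c"
    using uv_props[OF assms(1,2)] by auto
qed

lemma Ulow_term_nn:
  assumes "1 \<le> i" "i < m" "n < 2 ^ M"
  shows "0 \<le> real (bdigit i n) * fst (uv i (btrunc i n))"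
  using bdigit_01[of i n] uvb[OF assms] by auto

lemma Ulow_term_le:
  assumes "1 \<le> i" "i < m" "n < 2 ^ M"
  shows "real (bdigit i n) * fst (uv i (btrunc i n)) \<le> 2 ^ (i - 1) * h * B1 / c"
  using bdigit_01[of i n] uvb[OF assms] B1nn cpos d0p by auto

lemma Ulow_nn: "j < m \<Longrightarrow> n < 2 ^ M \<Longrightarrow> 0 \<le> Ulow j n"
  unfolding Ulow_def by (intro sum_nonneg Ulow_term_nn) auto

lemma Ulow_le: "j < m \<Longrightarrow> n < 2 ^ M \<Longrightarrow> Ulow j n \<le> (\<Sum>i\<in>{1..j}. 2 ^ (i - 1) * h * B1 / c)"
  unfolding Ulow_def by (intro sum_mono Ulow_term_le) auto

lemma Ulow_Suc: "Ulow (Suc j) n = Ulow j n + real (bdigit (Suc j) n) * fst (uv (Suc j) (btrunc (Suc j) n))"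
  unfolding Ulow_def by (simp add: sum.cl_ivl_Suc)

lemma Vlow_Suc: "Vlow (Suc j) n = Vlow j n + real (bdigit (Suc j) n) * snd (uv (Suc j) (btrunc (Suc j) n))"
  unfolding Vlow_def by (simp add: sum.cl_ivl_Suc)

definition "TT Y e i = Kc * (2 ^ (i - 1) * h) * (\<bar>Y - xx i\<bar> + e)\<^sup>2"

lemma TT_nn: "0 \<le> TT Y e i"
  unfolding TT_def using Kc_nn d0p by simp

lemma tele:
  assumes "j < m" "g mod 2 ^ j = 0" "r < 2 ^ j" "g + r < 2 ^ M" "Y \<le> 1"
    "0 \<le> Y - Ulow j (g + r)" "Ulow j (g + r) \<le> e"
  shows "\<bar>A (g + r) * f (Y - Ulow j (g + r)) + Vlow j (g + r) - A g * f Y\<bar> \<le> (\<Sum>i\<in>{1..j}. TT Y e i)"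
  using assms
proof (induction j arbitrary: g r Y e)
  case 0
  then show ?case by (simp add: Ulow_def Vlow_def)
next
  case (Suc j)
  let ?n = "g + r"
  have jm: "j < m" using Suc.prems by simp
  have sumS: "(\<Sum>i\<in>{1..Suc j}. TT Y e i) = (\<Sum>i\<in>{1..j}. TT Y e i) + TT Y e (Suc j)"
    by (simp add: sum.cl_ivl_Suc)
  show ?case
  proof (cases "r < 2 ^ j")
    case True
    have bd: "bdigit (Suc j) ?n = 0" by (rule bit_low[OF Suc.prems(2) True])
    have gj: "g mod 2 ^ j = 0" using Suc.prems(2)
      by (metis bit_high(4) pos2 zero_less_power)
    have U: "Ulow (Suc j) ?n = Ulow j ?n" and V: "Vlow (Suc j) ?n = Vlow j ?n"
      by (simp_all add: Ulow_Suc Vlow_Suc bd)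
    have "\<bar>A ?n * f (Y - Ulow j ?n) + Vlow j ?n - A g * f Y\<bar> \<le> (\<Sum>i\<in>{1..j}. TT Y e i)"
      using Suc.IH[OF jm gj True Suc.prems(4,5)] Suc.prems(6,7) U by simp
    then show ?thesis using U V sumS TT_nn[of Y e "Suc j"] by simp
  next
    case False
    define r' where "r' = r - 2 ^ j"
    define g' where "g' = g + 2 ^ j"
    have r'lt: "r' < 2 ^ j" using Suc.prems(3) False by (simp add: r'_def)
    have neq: "?n = g' + r'" using False by (simp add: r'_def g'_def)
    have bh: "bdigit (Suc j) ?n = 1" "btrunc (Suc j) ?n = g'" "g' mod 2 ^ j = 0"
      using bit_high[OF Suc.prems(2) r'lt] neq by (simp_all add: g'_def add.assoc)
    define u where "u = fst (uv (Suc j) g')"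
    define v where "v = snd (uv (Suc j) g')"
    have U: "Ulow (Suc j) ?n = Ulow j ?n + u" and V: "Vlow (Suc j) ?n = Vlow j ?n + v"
      by (simp_all add: Ulow_Suc Vlow_Suc bh u_def v_def)
    have nM: "?n < 2 ^ M" using Suc.prems(4) .
    have g'M: "g' < 2 ^ M" using nM neq by linarith
    have g'j: "2 ^ (Suc j - 1) \<le> g'" by (simp add: g'_def)
    have Sjm: "Suc j < m" using Suc.prems(1) .
    note P = uv_props[OF _ Sjm g'j g'M, simplified, folded u_def v_def]
    have U0: "0 \<le> Ulow j ?n" by (rule Ulow_nn[OF jm nM])
    have u0: "0 \<le> u" using P(1) by simp
    have IH: "\<bar>A ?n * f (Y - u - Ulow j ?n) + Vlow j ?n - A g' * f (Y - u)\<bar> \<le> (\<Sum>i\<in>{1..j}. TT (Y - u) (e - u) i)"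
      using Suc.IH[OF jm bh(3) r'lt, of "Y - u" "e - u"] Suc.prems(5,6,7) U u0 neq nM by simp
    have mono: "(\<Sum>i\<in>{1..j}. TT (Y - u) (e - u) i) \<le> (\<Sum>i\<in>{1..j}. TT Y e i)"
    proof (rule sum_mono)
      fix i assume "i \<in> {1..j}"
      have a: "0 \<le> \<bar>Y - u - xx i\<bar> + (e - u)" using U0 Suc.prems(7) U by simp
      have b: "\<bar>Y - u - xx i\<bar> + (e - u) \<le> \<bar>Y - xx i\<bar> + e" using u0 by simp
      have "(\<bar>Y - u - xx i\<bar> + (e - u))\<^sup>2 \<le> (\<bar>Y - xx i\<bar> + e)\<^sup>2" using b a by (rule power_mono)
      then show "TT (Y - u) (e - u) i \<le> TT Y e i" unfolding TT_def using Kc_nn d0p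
        by (intro mult_left_mono) auto
    qed
    have Ag: "A g = A g' - 2 ^ j * h" using aseq_sub[of "2 ^ j" g'] by (simp add: g'_def)
    have tg: "\<bar>(A g + 2 ^ j * h) * f (Y - u) + v - A g * f Y\<bar> \<le> 2 ^ j * h * Kc * (Y - xx (Suc j))\<^sup>2"
    proof (rule tangent_dev)
      show "0 \<le> u" by (rule u0)
      show "u \<le> xx (Suc j)" "xx (Suc j) \<le> 1" using P by auto
      show "0 \<le> A g" "A g \<le> 2" using aseq_bounds[of g] nM hpos by auto
      show "0 \<le> 2 ^ j * h" using d0p by simp
      show "u \<le> 2 ^ j * h * B1 / c" using P by simp
      show "(A g + 2 ^ j * h) * f (xx (Suc j) - u) + v = A g * f (xx (Suc j))" using P Ag
        by (simp add: g'_def)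
      show "(A g + 2 ^ j * h) * f1 (xx (Suc j) - u) = A g * f1 (xx (Suc j))" using P Ag
        by (simp add: g'_def)
      show "u \<le> Y" using U0 Suc.prems(6) U by simp
      show "Y \<le> 1" by (rule Suc.prems(5))
    qed
    have tg2: "2 ^ j * h * Kc * (Y - xx (Suc j))\<^sup>2 \<le> TT Y e (Suc j)"
    proof -
      have e0: "0 \<le> e" using U0 u0 U Suc.prems(7) by simp
      have "(Y - xx (Suc j))\<^sup>2 \<le> (\<bar>Y - xx (Suc j)\<bar> + e)\<^sup>2"
        using e0 by (metis abs_ge_zero add_increasing2 le_add_same_cancel1 power2_abs power_mono)
      moreover have "0 \<le> Kc * (2 ^ (Suc j - 1) * h)" using Kc_nn d0p by simp
      ultimately have "Kc * (2 ^ (Suc j - 1) * h) * (Y - xx (Suc j))\<^sup>2 \<le> TT Y e (Suc j)"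
        unfolding TT_def by (rule mult_left_mono)
      then show ?thesis by (simp add: mult_ac)
    qed
    have split: "A ?n * f (Y - Ulow (Suc j) ?n) + Vlow (Suc j) ?n - A g * f Y =
       (A ?n * f (Y - u - Ulow j ?n) + Vlow j ?n - A g' * f (Y - u)) +
       ((A g + 2 ^ j * h) * f (Y - u) + v - A g * f Y)"
      using U V Ag by (simp add: algebra_simps)
    have "\<bar>A ?n * f (Y - Ulow (Suc j) ?n) + Vlow (Suc j) ?n - A g * f Y\<bar> \<le>
       \<bar>A ?n * f (Y - u - Ulow j ?n) + Vlow j ?n - A g' * f (Y - u)\<bar> +
       \<bar>(A g + 2 ^ j * h) * f (Y - u) + v - A g * f Y\<bar>"
      unfolding split by (rule abs_triangle_ineq)
    also have "\<dots> \<le> (\<Sum>i\<in>{1..j}. TT Y e i) + TT Y e (Suc j)"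
      using IH mono tg tg2 by (intro add_mono) (rule order_trans; assumption)+
    finally show ?thesis unfolding sumS .
  qed
qed

end


lemma split_gen:
  fixes \<phi> :: "nat \<Rightarrow> nat \<Rightarrow> real"
  assumes "1 \<le> k" "k < m"
  shows "(\<Sum>i\<in>{1..<m}. real (bdigit i n) * \<phi> i (btrunc i n)) =
    (\<Sum>i\<in>{1..k}. real (bdigit i n) * \<phi> i (btrunc i n)) +
    (\<Sum>i\<in>{1..<m}. real (bdigit i (n - n mod 2 ^ k)) * \<phi> i (btrunc i (n - n mod 2 ^ k)))"
proof -
  let ?g = "n - n mod 2 ^ k"
  let ?F = "\<lambda>n i. real (bdigit i n) * \<phi> i (btrunc i n)"
  have c1: "sum (?F n) {1..<m} = sum (?F n) {1..<Suc k} + sum (?F n) {Suc k..<m}"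
    using assms by (intro sum.atLeastLessThan_concat[symmetric]) auto
  have c2: "sum (?F ?g) {1..<m} = sum (?F ?g) {1..<Suc k} + sum (?F ?g) {Suc k..<m}"
    using assms by (intro sum.atLeastLessThan_concat[symmetric]) auto
  have z: "sum (?F ?g) {1..<Suc k} = 0"
    by (intro sum.neutral) (auto simp: trunc_low)
  have h: "sum (?F ?g) {Suc k..<m} = sum (?F n) {Suc k..<m}"
    by (intro sum.cong) (auto simp: trunc_high)
  show ?thesis using c1 c2 z h by (simp add: atLeastLessThanSuc_atLeastAtMost)
qed

context constr begin

abbreviation "ut \<equiv> utot f f1 a0 d0 M"
abbreviation "vt \<equiv> vtot f f1 a0 d0 M"

lemma m_ge: "4 \<le> m" using M8 by simp

lemma tot_split:
  assumes "1 \<le> k" "k < m"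
  shows "ut n = Ulow k n + ut (n - n mod 2 ^ k)" "vt n = Vlow k n + vt (n - n mod 2 ^ k)"
  unfolding utot_def vtot_def Ulow_def Vlow_def
  by (rule split_gen[OF assms])+

lemma ut_nn: "n < 2 ^ M \<Longrightarrow> 0 \<le> ut n"
  unfolding utot_def by (intro sum_nonneg Ulow_term_nn) auto

lemma ut_le: assumes "n < 2 ^ M" shows "ut n \<le> B1 / (c * real M)"
proof -
  have "ut n \<le> (\<Sum>i\<in>{1..<m}. 2 ^ (i - 1) * h * B1 / c)"
    unfolding utot_def using assms by (intro sum_mono Ulow_term_le) auto
  also have "\<dots> = (h * B1 / c) * (\<Sum>i\<in>{1..m - 1}. (2::real) ^ (i - 1))"
  proof -
    have "{1..<m} = {1..m - 1}" using m_ge by auto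
    then show ?thesis by (simp add: sum_distrib_left mult_ac)
  qed
  also have "\<dots> = (h * B1 / c) * (2 ^ (m - 1) - 1)" by (simp only: geo_sum)
  also have "\<dots> \<le> (h * B1 / c) * 2 ^ m"
  proof (rule mult_left_mono)
    have "(2::real) ^ (m - 1) \<le> 2 ^ m" by (rule power_increasing) auto
    then show "(2::real) ^ (m - 1) - 1 \<le> 2 ^ m" by linarith
    show "0 \<le> h * B1 / c" using d0p B1nn cpos by simp
  qed
  also have "\<dots> = d0 * B1 / (c * 2 ^ m)" using cpos by (simp add: pow_M field_simps)
  also have "\<dots> \<le> 1 * B1 / (c * real M)"
  proof (rule frac_le)
    show "0 \<le> 1 * B1" using B1nn by simp
    show "d0 * B1 \<le> 1 * B1" using d01 B1nn by (intro mult_right_mono) auto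
    show "0 < c * real M" using cpos M8 by simp
    have "2 * m \<le> (2::nat) ^ m" by (rule pow_ge) (use m_ge in auto)
    then have "real M \<le> 2 ^ m" using M2m
      by (metis of_nat_le_iff of_nat_numeral of_nat_power)
    then show "c * real M \<le> c * 2 ^ m" using cpos by simp
  qed
  finally show ?thesis by simp
qed

lemma dev:
  assumes nM: "n < 2 ^ M" and k1: "1 \<le> k'" and km: "k' < m" and x: "0 \<le> x" "x \<le> 1"
    and a: "A n \<le> a" "a \<le> A n + h" and X1: "x + ut n \<le> 1"
  defines "g \<equiv> n - n mod 2 ^ k'"
  shows "0 \<le> x + ut n - ut g" "x + ut n - ut g \<le> 1"
    "\<bar>a * f x + vt n - (A g * f (x + ut n - ut g) + vt g)\<bar>
       \<le> h * B0 + (\<Sum>i\<in>{1..k'}. TT (x + ut n - ut g) (Ulow k' n) i)"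
proof -
  have gM: "g < 2 ^ M" using nM trunc_le[of n k'] by (simp add: g_def)
  have sp: "ut n = Ulow k' n + ut g" "vt n = Vlow k' n + vt g"
    unfolding g_def by (rule tot_split[OF k1 km])+
  have U0: "0 \<le> Ulow k' n" using Ulow_nn[OF km nM] .
  have ug: "0 \<le> ut g" using ut_nn[OF gM] .
  define Y where "Y = x + ut n - ut g"
  have Y: "Y = x + Ulow k' n" using sp by (simp add: Y_def)
  show "0 \<le> x + ut n - ut g" using Y x U0 by (simp add: Y_def)
  show "x + ut n - ut g \<le> 1" using X1 ug by simp
  have T: "\<bar>A (g + n mod 2 ^ k') * f (Y - Ulow k' (g + n mod 2 ^ k')) + Vlow k' (g + n mod 2 ^ k') - A g * f Y\<bar>
      \<le> (\<Sum>i\<in>{1..k'}. TT Y (Ulow k' (g + n mod 2 ^ k')) i)"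
  proof (rule tele[OF km])
    show "g mod 2 ^ k' = 0" by (simp add: g_def trunc_mod)
    show "n mod 2 ^ k' < 2 ^ k'" by simp
    show "g + n mod 2 ^ k' < 2 ^ M" using nM by (simp add: g_def)
    show "Y \<le> 1" using X1 ug by (simp add: Y_def)
    show "0 \<le> Y - Ulow k' (g + n mod 2 ^ k')" using x Y by (simp add: g_def)
  qed simp
  have gn: "g + n mod 2 ^ k' = n" by (simp add: g_def)
  have T': "\<bar>A n * f x + Vlow k' n - A g * f Y\<bar> \<le> (\<Sum>i\<in>{1..k'}. TT Y (Ulow k' n) i)"
    using T unfolding gn by (simp add: Y)
  have fx: "\<bar>f x\<bar> \<le> B0" using fB0 x by simp
  have "\<bar>(a - A n) * f x\<bar> \<le> h * B0"
  proof -
    have "\<bar>(a - A n) * f x\<bar> = \<bar>a - A n\<bar> * \<bar>f x\<bar>" by (simp add: abs_mult)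
    also have "\<dots> \<le> h * B0" using a fx by (intro mult_mono) auto
    finally show ?thesis .
  qed
  moreover have "a * f x + vt n - (A g * f Y + vt g) = (a - A n) * f x + (A n * f x + Vlow k' n - A g * f Y)"
    using sp by (simp add: algebra_simps)
  ultimately have "\<bar>a * f x + vt n - (A g * f Y + vt g)\<bar> \<le> h * B0 + (\<Sum>i\<in>{1..k'}. TT Y (Ulow k' n) i)"
    using T' abs_triangle_ineq[of "(a - A n) * f x" "A n * f x + Vlow k' n - A g * f Y"]
    by linarith
  then show "\<bar>a * f x + vt n - (A g * f (x + ut n - ut g) + vt g)\<bar>
       \<le> h * B0 + (\<Sum>i\<in>{1..k'}. TT (x + ut n - ut g) (Ulow k' n) i)"
    by (simp add: Y_def)
qed

definition "Qc = 2 + B1 / c"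

lemma sum_bound:
  assumes km: "k < m" and kp: "k' = min (Suc k) (m - 1)" and X: "xx k \<le> X" "X \<le> xx (Suc k)"
    and e: "0 \<le> e" and Ye: "\<bar>Y - X\<bar> + e \<le> B1 / (c * real M)"
  shows "(\<Sum>i\<in>{1..k'}. TT Y e i) \<le> Kc * h * Qc\<^sup>2 / (real M)\<^sup>2 * (6 * 2 ^ k')"
proof -
  have Mp: "0 < real M" using M8 by simp
  have kk: "k \<le> k'" "k' \<le> Suc k" using km kp by auto
  have "TT Y e i \<le> Kc * h * Qc\<^sup>2 / (real M)\<^sup>2 * (2 ^ (i - 1) * (real k' + 1 - real i)\<^sup>2)"
    if i: "i \<in> {1..k'}" for i
  proof -
    have dX: "\<bar>X - xx i\<bar> \<le> 2 * (real k' + 1 - real i) / real M"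
    proof -
      have "X - xx i \<le> 2 * (real k' + 1 - real i) / real M"
      proof -
        have "X - xx i \<le> 2 * (real (Suc k) - real i) / real M"
          using X by (simp add: xx_eq diff_divide_distrib)
        also have "\<dots> \<le> 2 * (real k' + 1 - real i) / real M"
          using kk Mp by (intro divide_right_mono) auto
        finally show ?thesis .
      qed
      moreover have "xx i - X \<le> 2 * (real k' + 1 - real i) / real M"
      proof -
        have "xx i - X \<le> 2 * (real i - real k) / real M"
          using X by (simp add: xx_eq diff_divide_distrib)
        also have "\<dots> \<le> 2 * (real k' + 1 - real i) / real M"
          using kk Mp i by (intro divide_right_mono) auto
        finally show ?thesis .
      qed
      ultimately show ?thesis by linarith
    qed
    have "\<bar>Y - xx i\<bar> + e \<le> \<bar>X - xx i\<bar> + (\<bar>Y - X\<bar> + e)" by linarith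
    also have "\<dots> \<le> 2 * (real k' + 1 - real i) / real M + B1 / (c * real M)"
      using dX Ye by linarith
    also have "\<dots> \<le> Qc * (real k' + 1 - real i) / real M"
    proof -
      have r1: "1 \<le> real k' + 1 - real i" using i by auto
      have "B1 / c * 1 \<le> B1 / c * (real k' + 1 - real i)"
        using r1 B1nn cpos by (intro mult_left_mono) auto
      then have "2 * (real k' + 1 - real i) + B1 / c \<le> Qc * (real k' + 1 - real i)"
        unfolding Qc_def by (simp add: algebra_simps)
      then have "(2 * (real k' + 1 - real i) + B1 / c) / real M \<le> Qc * (real k' + 1 - real i) / real M"
        using Mp by (intro divide_right_mono) auto
      moreover have "(2 * (real k' + 1 - real i) + B1 / c) / real M = 2 * (real k' + 1 - real i) / real M + B1 / (c * real M)"
        by (simp add: add_divide_distrib)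
      ultimately show ?thesis by simp
    qed
    finally have le: "\<bar>Y - xx i\<bar> + e \<le> Qc * (real k' + 1 - real i) / real M" .
    have "(\<bar>Y - xx i\<bar> + e)\<^sup>2 \<le> (Qc * (real k' + 1 - real i) / real M)\<^sup>2"
      using le e by (intro power_mono) auto
    then have "TT Y e i \<le> Kc * (2 ^ (i - 1) * h) * (Qc * (real k' + 1 - real i) / real M)\<^sup>2"
      unfolding TT_def using Kc_nn d0p by (intro mult_left_mono) auto
    also have "\<dots> = Kc * h * Qc\<^sup>2 / (real M)\<^sup>2 * (2 ^ (i - 1) * (real k' + 1 - real i)\<^sup>2)"
      by (simp add: power_divide power_mult_distrib)
    finally show ?thesis .
  qed
  then have "(\<Sum>i\<in>{1..k'}. TT Y e i) \<le> (\<Sum>i\<in>{1..k'}. Kc * h * Qc\<^sup>2 / (real M)\<^sup>2 * (2 ^ (i - 1) * (real k' + 1 - real i)\<^sup>2))"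
    by (rule sum_mono)
  also have "\<dots> = Kc * h * Qc\<^sup>2 / (real M)\<^sup>2 * (\<Sum>i\<in>{1..k'}. 2 ^ (i - 1) * (real k' + 1 - real i)\<^sup>2)"
    by (rule sum_distrib_left[symmetric])
  also have "\<dots> = Kc * h * Qc\<^sup>2 / (real M)\<^sup>2 * (6 * 2 ^ k' - (real k' ^ 2 + 4 * real k' + 6))"
    by (simp only: S_id)
  also have "\<dots> \<le> Kc * h * Qc\<^sup>2 / (real M)\<^sup>2 * (6 * 2 ^ k')"
  proof (rule mult_left_mono)
    have "0 \<le> real k' ^ 2" by simp
    then show "6 * 2 ^ k' - (real k' ^ 2 + 4 * real k' + 6) \<le> 6 * 2 ^ k'" by linarith
    show "0 \<le> Kc * h * Qc\<^sup>2 / (real M)\<^sup>2" using Kc_nn d0p by simp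
  qed
  finally show ?thesis .
qed

end


context constr begin

definition "lo = 4 * log 2 (real M) / real M"

lemma choose_k:
  assumes X: "lo \<le> X" "X \<le> 1"
  shows "\<exists>k<m. xx k \<le> X \<and> X \<le> xx (Suc k) \<and> real M ^ 2 \<le> 2 * 2 ^ k"
proof -
  have Mp: "0 < real M" using M8 by simp
  have Mr: "real M = 2 * real m" using M2m by (metis of_nat_mult of_nat_numeral)
  have lg: "0 < log 2 (real M)" using M8 by simp
  have X0: "0 < X" using X(1) lg Mp unfolding lo_def by (smt (verit) divide_pos_pos)
  define t where "t = X * real M / 2"
  have t0: "0 \<le> t" using X0 Mp by (simp add: t_def)
  have tm: "t \<le> real m" using X(2) Mp Mr by (simp add: t_def)
  have tlo: "2 * log 2 (real M) \<le> t"
  proof -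
    have "lo * real M / 2 \<le> X * real M / 2" using X(1) Mp by (simp add: divide_right_mono)
    then show ?thesis using Mp by (simp add: lo_def t_def)
  qed
  define k0 where "k0 = nat \<lfloor>t\<rfloor>"
  have k0: "real k0 \<le> t" "t < real k0 + 1" using t0 by (simp_all add: k0_def)
  define k where "k = min k0 (m - 1)"
  have m1: "1 \<le> m" using M8 by simp
  have km: "k < m" using m1 by (simp add: k_def)
  have xxe: "xx i = 2 * real i / real M" for i by (simp add: xx_eq)
  have props: "xx k \<le> X \<and> X \<le> xx (Suc k) \<and> t - 1 \<le> real k"
  proof (cases "k0 \<le> m - 1")
    case True
    then have k: "k = k0" by (simp add: k_def)
    have "xx k \<le> X" using k0 Mp by (simp add: k xxe t_def field_simps)
    moreover have "X \<le> xx (Suc k)" using k0 Mp by (simp add: k xxe t_def field_simps)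
    ultimately show ?thesis using k0 k by simp
  next
    case False
    then have k: "k = m - 1" by (simp add: k_def)
    have rk: "real k = real m - 1" using m1 k by (simp add: of_nat_diff)
    have "real m - 1 \<le> t" using False k0 m1 by linarith
    then have "xx k \<le> X" using Mp Mr by (simp add: xxe rk t_def field_simps)
    moreover have "X \<le> xx (Suc k)" using X(2) m1 Mr Mp by (simp add: xxe k of_nat_diff field_simps)
    moreover have "t - 1 \<le> real k" using tm rk by simp
    ultimately show ?thesis by simp
  qed
  have "2 * log 2 (real M) \<le> real (Suc k)" using props tlo by simp
  then have "(2::real) powr (2 * log 2 (real M)) \<le> 2 powr real (Suc k)"
    by (rule powr_mono) simp
  moreover have "(2::real) powr (2 * log 2 (real M)) = real M ^ 2"
  proof -
    have "(2::real) powr (2 * log 2 (real M)) = 2 powr (log 2 (real M)) * 2 powr (log 2 (real M))"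
      by (simp add: powr_add[symmetric])
    also have "\<dots> = real M ^ 2" using Mp by (simp add: power2_eq_square)
    finally show ?thesis .
  qed
  moreover have "(2::real) powr real (Suc k) = 2 * 2 ^ k" by (subst powr_realpow) auto
  ultimately show ?thesis using props km by auto
qed

definition "Ns = nat \<lceil>2 ^ (M + 2) * (B1 + 1) * real M / d0\<rceil> + 1"
definition "eta = 2 / (real M * real Ns)"
definition "kp k = min (Suc k) (m - 1)"
definition "Wc k' = h * B0 + Kc * h * Qc\<^sup>2 / (real M)\<^sup>2 * (6 * 2 ^ k')"
definition "rho k = 2 * Wc (kp k) + 2 * B1 * eta"
definition "pts n = (\<lambda>p. p + (ut n, vt n)) ` Tpiece f a0 d0 M n"

lemma kp_props: "k < m \<Longrightarrow> 1 \<le> kp k \<and> kp k < m \<and> k \<le> kp k"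
  using m_ge by (auto simp: kp_def)

lemma pts_elim:
  assumes "p \<in> pts n"
  obtains x a where "0 \<le> x" "x \<le> 1" "A n \<le> a" "a \<le> A n + h" "p = (x + ut n, a * f x + vt n)"
  using assms unfolding pts_def Tpiece_def by auto

lemma Wc_nn: "0 \<le> Wc k'"
  unfolding Wc_def using B0nn d0p Kc_nn by simp

lemma Ns_pos: "0 < Ns" by (simp add: Ns_def)

lemma eta_pos: "0 < eta"
  unfolding eta_def using Ns_pos M8 by simp

lemma point_dev:
  assumes p: "p \<in> pts n" and nM: "n < 2 ^ M" and X1: "fst p \<le> 1" and km: "k < m"
    and Xk: "xx k \<le> fst p" "fst p \<le> xx (Suc k)"
  defines "g \<equiv> n - n mod 2 ^ kp k"
  shows "0 \<le> fst p - ut g" "fst p - ut g \<le> 1"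
    "\<bar>snd p - (A g * f (fst p - ut g) + vt g)\<bar> \<le> Wc (kp k)"
proof -
  obtain x a where xa: "0 \<le> x" "x \<le> 1" "A n \<le> a" "a \<le> A n + h" and pe: "p = (x + ut n, a * f x + vt n)"
    using pts_elim[OF p] by blast
  have kp: "1 \<le> kp k" "kp k < m" "k \<le> kp k" using kp_props[OF km] by auto
  have X1': "x + ut n \<le> 1" using X1 pe by simp
  note D = dev[OF nM kp(1) kp(2) xa X1', folded g_def]
  show "0 \<le> fst p - ut g" "fst p - ut g \<le> 1" using D pe by auto
  have gM: "g < 2 ^ M" using nM trunc_le[of n "kp k"] by (simp add: g_def)
  have sp: "ut n = Ulow (kp k) n + ut g" unfolding g_def by (rule tot_split[OF kp(1) kp(2)])
  have ug: "0 \<le> ut g" using ut_nn[OF gM] .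
  have "(\<Sum>i\<in>{1..kp k}. TT (x + ut n - ut g) (Ulow (kp k) n) i) \<le> Kc * h * Qc\<^sup>2 / (real M)\<^sup>2 * (6 * 2 ^ kp k)"
  proof (rule sum_bound[OF km])
    show "kp k = min (Suc k) (m - 1)" by (simp add: kp_def)
    show "xx k \<le> x + ut n" "x + ut n \<le> xx (Suc k)" using Xk pe by auto
    show "0 \<le> Ulow (kp k) n" by (rule Ulow_nn[OF kp(2) nM])
    have "\<bar>x + ut n - ut g - (x + ut n)\<bar> + Ulow (kp k) n = ut n" using sp ug by simp
    then show "\<bar>x + ut n - ut g - (x + ut n)\<bar> + Ulow (kp k) n \<le> B1 / (c * real M)" using ut_le[OF nM] by simp
  qed
  then show "\<bar>snd p - (A g * f (fst p - ut g) + vt g)\<bar> \<le> Wc (kp k)"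
    using D(3) pe unfolding Wc_def by simp
qed

definition "Qs k s G = {p. \<exists>n<2 ^ M. n div 2 ^ kp k = G \<and> p \<in> pts n \<and>
   xx k + real s * eta \<le> fst p \<and> fst p \<le> xx k + real (Suc s) * eta \<and> fst p \<le> 1}"
definition "ystar k s G = snd (SOME p. p \<in> Qs k s G)"
definition rbox :: "nat \<times> nat \<times> nat \<Rightarrow> (real \<times> real) set" where "rbox i = (case i of (k, s, G) \<Rightarrow>
   cbox (xx k + real s * eta, ystar k s G - rho k) (xx k + real (Suc s) * eta, ystar k s G + rho k))"
definition "Kset = {k. k < m \<and> real M ^ 2 \<le> 2 * 2 ^ k}"
definition Iset :: "(nat \<times> nat \<times> nat) set" where "Iset = Sigma Kset (\<lambda>k. {..<Ns} \<times> {..<2 ^ (M - kp k)})"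

lemma Ns_eta: "real Ns * eta = 2 / real M"
  unfolding eta_def using Ns_pos M8 by simp

lemma xx_step: "xx (Suc k) = xx k + real Ns * eta"
proof -
  have "xx (Suc k) = xx k + 2 / real M" by (simp add: xx_eq add_divide_distrib)
  then show ?thesis using Ns_eta by simp
qed

lemma choose_s:
  assumes "xx k \<le> X" "X \<le> xx (Suc k)"
  shows "\<exists>s<Ns. xx k + real s * eta \<le> X \<and> X \<le> xx k + real (Suc s) * eta"
proof -
  have ep: "0 < eta" by (rule eta_pos)
  have N1: "1 \<le> Ns" by (simp add: Ns_def)
  define t where "t = (X - xx k) / eta"
  have t0: "0 \<le> t" using assms ep by (simp add: t_def)
  have step: "xx (Suc k) = xx k + real Ns * eta" by (rule xx_step)
  have tN: "t \<le> real Ns" using assms(2) ep step by (simp add: t_def field_simps)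
  define s0 where "s0 = nat \<lfloor>t\<rfloor>"
  have s0: "real s0 \<le> t" "t < real s0 + 1" using t0 by (simp_all add: s0_def)
  define s where "s = min s0 (Ns - 1)"
  have sN: "s < Ns" using N1 by (simp add: s_def)
  have "real s \<le> t" using s0 by (simp add: s_def)
  then have l: "xx k + real s * eta \<le> X" using ep by (simp add: t_def field_simps)
  have "t \<le> real s + 1"
  proof (cases "s0 \<le> Ns - 1")
    case True then show ?thesis using s0 by (simp add: s_def)
  next
    case False then have "s = Ns - 1" by (simp add: s_def)
    then show ?thesis using tN N1 by (simp add: of_nat_diff)
  qed
  then have r: "X \<le> xx k + real (Suc s) * eta" using ep by (simp add: t_def field_simps)
  show ?thesis using sN l r by blast
qed

lemma cover: "FM f f1 a0 d0 M \<subseteq> (\<Union>i\<in>Iset. rbox i)"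
proof
  fix p assume pF: "p \<in> FM f f1 a0 d0 M"
  have pU: "p \<in> (\<Union>n\<in>{0..<2 ^ M}. pts n)" and pR: "p \<in> {lo..1} \<times> UNIV"
    using pF unfolding FM_def pts_def lo_def by blast+
  from pU obtain n where nM: "n < 2 ^ M" and pn: "p \<in> pts n" by auto
  from pR have Xlo: "lo \<le> fst p" and X1: "fst p \<le> 1" by auto
  obtain k where km: "k < m" and Xk: "xx k \<le> fst p" "fst p \<le> xx (Suc k)" and k2: "real M ^ 2 \<le> 2 * 2 ^ k"
    using choose_k[OF Xlo X1] by blast
  obtain s where sN: "s < Ns" and Xs: "xx k + real s * eta \<le> fst p" "fst p \<le> xx k + real (Suc s) * eta"
    using choose_s[OF Xk] by blast
  define G where "G = n div 2 ^ kp k"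
  have "m \<le> M" by simp
  then have kpM: "kp k \<le> M" using kp_props[OF km] by linarith
  have GM: "G < 2 ^ (M - kp k)"
  proof -
    have "n < 2 ^ kp k * 2 ^ (M - kp k)" using nM kpM by (simp flip: power_add)
    then show ?thesis unfolding G_def by (simp add: div_less_iff_less_mult mult.commute)
  qed
  have iI: "(k, s, G) \<in> Iset" using km k2 sN GM by (simp add: Iset_def Kset_def)
  have pQ: "p \<in> Qs k s G" unfolding Qs_def using nM pn Xs X1 by (auto simp: G_def)
  define q where "q = (SOME p. p \<in> Qs k s G)"
  have qQ: "q \<in> Qs k s G" unfolding q_def using pQ by (rule someI)
  then obtain n' where n'M: "n' < 2 ^ M" and n'G: "n' div 2 ^ kp k = G" and qn: "q \<in> pts n'"
      and Yq: "xx k + real s * eta \<le> fst q" "fst q \<le> xx k + real (Suc s) * eta" and q1: "fst q \<le> 1"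
    unfolding Qs_def by blast
  define g where "g = n - n mod 2 ^ kp k"
  have gg: "n' - n' mod 2 ^ kp k = g"
    using n'G by (simp add: g_def G_def minus_mod_eq_mult_div)
  have step: "xx (Suc k) = xx k + real Ns * eta" by (rule xx_step)
  have Ns1: "real (Suc s) \<le> real Ns" using sN by simp
  have qk: "xx k \<le> fst q" "fst q \<le> xx (Suc k)"
  proof -
    show "xx k \<le> fst q" using Yq eta_pos by (smt (verit) of_nat_0_le_iff mult_nonneg_nonneg)
    have "real (Suc s) * eta \<le> real Ns * eta" using Ns1 eta_pos by (intro mult_right_mono) auto
    then show "fst q \<le> xx (Suc k)" using Yq step by simp
  qed
  note Dp = point_dev[OF pn nM X1 km Xk, folded g_def]
  note Dq = point_dev[OF qn n'M q1 km qk, unfolded gg]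
  have Ag: "A g \<le> 2" "0 \<le> A g" using aseq_bounds[of g] nM trunc_le[of n "kp k"] hpos
    by (auto simp: g_def)
  have "\<bar>f (fst p - ut g) - f (fst q - ut g)\<bar> \<le> B1 * \<bar>fst p - fst q\<bar>"
    using f_lip[of "fst p - ut g" "fst q - ut g"] Dp Dq by simp
  also have "\<dots> \<le> B1 * eta"
  proof (rule mult_left_mono)
    have "real (Suc s) * eta - real s * eta = eta" by (simp add: algebra_simps)
    then show "\<bar>fst p - fst q\<bar> \<le> eta" using Xs Yq by linarith
  qed (rule B1nn)
  finally have fl: "\<bar>f (fst p - ut g) - f (fst q - ut g)\<bar> \<le> B1 * eta" .
  have "\<bar>A g * f (fst p - ut g) - A g * f (fst q - ut g)\<bar> \<le> 2 * (B1 * eta)"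
  proof -
    have "\<bar>A g * f (fst p - ut g) - A g * f (fst q - ut g)\<bar> = A g * \<bar>f (fst p - ut g) - f (fst q - ut g)\<bar>"
      using Ag by (simp add: abs_mult right_diff_distrib[symmetric])
    also have "\<dots> \<le> 2 * (B1 * eta)" using Ag fl by (intro mult_mono) auto
    finally show ?thesis .
  qed
  then have "\<bar>snd p - snd q\<bar> \<le> rho k"
    using Dp(3) Dq(3) unfolding rho_def by linarith
  then have "p \<in> rbox (k, s, G)"
    using Xs by (simp add: rbox_def ystar_def q_def[symmetric] cbox_Pair_iff[symmetric] mem_box
        Basis_prod_def prod_eq_iff cbox_Pair_eq) (cases p, auto simp: abs_le_iff)
  then show "p \<in> (\<Union>i\<in>Iset. rbox i)" using iI by blast
qed

lemma rho_nn: "0 \<le> rho k"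
  unfolding rho_def using Wc_nn eta_pos B1nn by simp

lemma rbox_sets: "rbox i \<in> sets lebesgue"
  unfolding rbox_def by (auto split: prod.splits)

lemma meas_box: "measure lebesgue (rbox (k, s, G)) = eta * (2 * rho k)"
proof -
  have e: "xx k + real s * eta \<le> xx k + real (Suc s) * eta" using eta_pos by (simp add: algebra_simps)
  have r: "ystar k s G - rho k \<le> ystar k s G + rho k" using rho_nn[of k] by simp
  have "measure lebesgue (rbox (k, s, G)) = measure lborel (rbox (k, s, G))"
    by (simp add: rbox_def)
  also have "\<dots> = eta * (2 * rho k)"
    unfolding rbox_def using e r by (simp add: content_Pair content_real algebra_simps)
  finally show ?thesis .
qed

lemma finite_Iset: "finite Iset"
proof -
  have "Kset \<subseteq> {..<m}" by (auto simp: Kset_def)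
  then have "finite Kset" by (rule finite_subset) simp
  then show ?thesis unfolding Iset_def by (intro finite_SigmaI) auto
qed

lemma sum_Iset: "(\<Sum>i\<in>Iset. measure lebesgue (rbox i)) = (\<Sum>k\<in>Kset. real (Ns * 2 ^ (M - kp k)) * (eta * (2 * rho k)))"
proof -
  have fK: "finite Kset"
  proof -
    have "Kset \<subseteq> {..<m}" by (auto simp: Kset_def)
    then show ?thesis by (rule finite_subset) simp
  qed
  have "(\<Sum>i\<in>Iset. measure lebesgue (rbox i)) = (\<Sum>i\<in>Iset. eta * (2 * rho (fst i)))"
    by (intro sum.cong) (auto simp: meas_box)
  also have "\<dots> = (\<Sum>k\<in>Kset. \<Sum>j\<in>{..<Ns} \<times> {..<(2::nat) ^ (M - kp k)}. eta * (2 * rho k))"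
    unfolding Iset_def using fK by (subst sum.Sigma) (auto simp: case_prod_beta)
  also have "\<dots> = (\<Sum>k\<in>Kset. real (Ns * 2 ^ (M - kp k)) * (eta * (2 * rho k)))"
    by (simp add: card_cartesian_product)
  finally show ?thesis .
qed

definition "Cc = 4 * B0 + 12 * Kc * Qc\<^sup>2 + 1"

lemma term_bound:
  assumes k: "k \<in> Kset"
  shows "real (Ns * 2 ^ (M - kp k)) * (eta * (2 * rho k)) \<le> 4 / real M * (Cc * d0 / (real M)\<^sup>2)"
proof -
  have km: "k < m" and k2: "real M ^ 2 \<le> 2 * 2 ^ k" using k by (auto simp: Kset_def)
  define k' where "k' = kp k"
  have kk: "k \<le> k'" "k' < m" using kp_props[OF km] by (auto simp: k'_def)
  have "m \<le> M" by simp
  then have k'M: "k' \<le> M" using kk by linarith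
  have Mp: "0 < real M" using M8 by simp
  have P: "(2::real) ^ (M - k') * 2 ^ k' = 2 ^ M" using k'M by (simp flip: power_add)
  have pk: "(2::real) ^ k \<le> 2 ^ k'" using kk by (intro power_increasing) auto
  have M2: "real M ^ 2 \<le> 2 * 2 ^ k'" using k2 pk by linarith
  define T where "T = (2::real) ^ (M - k')"
  have Tp: "0 < T" by (simp add: T_def)
  have w1: "T * (h * B0) \<le> 2 * d0 * B0 / (real M)\<^sup>2"
  proof -
    have "T * (h * B0) = d0 * B0 / 2 ^ k'" using P by (simp add: T_def field_simps)
    also have "\<dots> \<le> d0 * B0 / (real M ^ 2 / 2)"
      using M2 Mp d0p B0nn by (intro divide_left_mono) (auto intro: mult_nonneg_nonneg)
    also have "\<dots> = 2 * d0 * B0 / (real M)\<^sup>2" by simp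
    finally show ?thesis .
  qed
  have w2: "T * (Kc * h * Qc\<^sup>2 / (real M)\<^sup>2 * (6 * 2 ^ k')) = 6 * Kc * Qc\<^sup>2 * d0 / (real M)\<^sup>2"
  proof -
    have "T * (Kc * h * Qc\<^sup>2 / (real M)\<^sup>2 * (6 * 2 ^ k')) = (T * 2 ^ k') * h * (6 * Kc * Qc\<^sup>2 / (real M)\<^sup>2)"
      by (simp add: algebra_simps)
    also have "\<dots> = 6 * Kc * Qc\<^sup>2 * d0 / (real M)\<^sup>2" using P by (simp add: T_def)
    finally show ?thesis .
  qed
  have W: "T * Wc k' \<le> (2 * B0 + 6 * Kc * Qc\<^sup>2) * d0 / (real M)\<^sup>2"
  proof -
    have "T * Wc k' = T * (h * B0) + T * (Kc * h * Qc\<^sup>2 / (real M)\<^sup>2 * (6 * 2 ^ k'))"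
      unfolding Wc_def by (simp add: distrib_left)
    also have "\<dots> \<le> 2 * d0 * B0 / (real M)\<^sup>2 + 6 * Kc * Qc\<^sup>2 * d0 / (real M)\<^sup>2"
      using w1 w2 by linarith
    also have "\<dots> = (2 * B0 + 6 * Kc * Qc\<^sup>2) * d0 / (real M)\<^sup>2" by (simp add: algebra_simps add_divide_distrib)
    finally show ?thesis .
  qed
  have E: "T * (2 * B1 * eta) \<le> d0 / (real M)\<^sup>2"
  proof -
    have Ns: "2 ^ (M + 2) * (B1 + 1) * real M / d0 \<le> real Ns"
      unfolding Ns_def by (metis add_increasing2 of_nat_0_le_iff of_nat_le_iff real_nat_ceiling_ge
          nat_le_real_less of_nat_add le_add1 order_trans zero_le_one)
    have T2: "T \<le> 2 ^ M" unfolding T_def by (intro power_increasing) auto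
    have "T * (2 * B1 * eta) \<le> 2 ^ M * (2 * B1 * eta)"
      using T2 B1nn eta_pos by (intro mult_right_mono) auto
    also have "\<dots> = 2 ^ (M + 2) * B1 / (real M * real Ns)" unfolding eta_def by (simp add: power_add)
    also have "\<dots> \<le> 2 ^ (M + 2) * (B1 + 1) / (real M * real Ns)"
      using Mp Ns_pos by (intro divide_right_mono mult_left_mono) auto
    also have "\<dots> \<le> 2 ^ (M + 2) * (B1 + 1) / (real M * (2 ^ (M + 2) * (B1 + 1) * real M / d0))"
      using Ns Mp d0p B1nn Ns_pos by (intro divide_left_mono mult_left_mono mult_pos_pos) auto
    also have "\<dots> = d0 / (real M)\<^sup>2"
    proof -
      define Z where "Z = (2::real) ^ (M + 2) * (B1 + 1)"
      have Zp: "0 < Z" using B1nn by (simp add: Z_def)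
      have "Z / (real M * (Z * real M / d0)) = d0 / (real M)\<^sup>2"
        using Zp Mp d0p by (simp add: field_simps power2_eq_square)
      then show ?thesis by (simp add: Z_def mult.assoc)
    qed
    finally show ?thesis .
  qed
  have "T * rho k = 2 * (T * Wc k') + T * (2 * B1 * eta)"
    unfolding rho_def k'_def by (simp add: algebra_simps)
  also have "\<dots> \<le> 2 * ((2 * B0 + 6 * Kc * Qc\<^sup>2) * d0 / (real M)\<^sup>2) + d0 / (real M)\<^sup>2"
    using W E by linarith
  also have "\<dots> = Cc * d0 / (real M)\<^sup>2" by (simp add: Cc_def algebra_simps add_divide_distrib)
  finally have Tr: "T * rho k \<le> Cc * d0 / (real M)\<^sup>2" .
  have "real (Ns * 2 ^ (M - kp k)) * (eta * (2 * rho k)) = (real Ns * eta) * 2 * (T * rho k)"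
    by (simp add: T_def k'_def)
  also have "\<dots> = 4 / real M * (T * rho k)" using Ns_eta by simp
  also have "\<dots> \<le> 4 / real M * (Cc * d0 / (real M)\<^sup>2)"
    using Tr Mp by (intro mult_left_mono) auto
  finally show ?thesis .
qed

lemma Cc_pos: "0 < Cc"
  unfolding Cc_def using B0nn Kc_nn by (simp add: add_nonneg_pos)

lemma main_bound: "measure lebesgue (FM f f1 a0 d0 M) \<le> 2 * Cc * d0 / (real M)\<^sup>2"
proof -
  have Mp: "0 < real M" using M8 by simp
  have U: "(\<Union>i\<in>Iset. rbox i) \<in> fmeasurable lebesgue"
    by (intro fmeasurable.finite_UN finite_Iset) (auto simp: rbox_def split: prod.splits)
  have fK: "finite Kset"
  proof -
    have "Kset \<subseteq> {..<m}" by (auto simp: Kset_def)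
    then show ?thesis by (rule finite_subset) simp
  qed
  have cK: "card Kset \<le> m"
  proof -
    have "card Kset \<le> card {..<m}" by (rule card_mono) (auto simp: Kset_def)
    then show ?thesis by simp
  qed
  have "measure lebesgue (\<Union>i\<in>Iset. rbox i) \<le> (\<Sum>i\<in>Iset. measure lebesgue (rbox i))"
    by (rule measure_UNION_le[OF finite_Iset rbox_sets])
  also have "\<dots> = (\<Sum>k\<in>Kset. real (Ns * 2 ^ (M - kp k)) * (eta * (2 * rho k)))" by (rule sum_Iset)
  also have "\<dots> \<le> (\<Sum>k\<in>Kset. 4 / real M * (Cc * d0 / (real M)\<^sup>2))"
    by (intro sum_mono term_bound)
  also have "\<dots> = real (card Kset) * (4 / real M * (Cc * d0 / (real M)\<^sup>2))" by simp
  also have "\<dots> \<le> real m * (4 / real M * (Cc * d0 / (real M)\<^sup>2))"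
    using cK Cc_pos d0p Mp by (intro mult_right_mono) auto
  also have "\<dots> = 2 * Cc * d0 / (real M)\<^sup>2"
  proof -
    have "real M = 2 * real m" using M2m by (metis of_nat_mult of_nat_numeral)
    then show ?thesis using Mp by (simp add: field_simps)
  qed
  finally have UB: "measure lebesgue (\<Union>i\<in>Iset. rbox i) \<le> 2 * Cc * d0 / (real M)\<^sup>2" .
  show ?thesis
  proof (cases "FM f f1 a0 d0 M \<in> sets lebesgue")
    case True
    then have "measure lebesgue (FM f f1 a0 d0 M) \<le> measure lebesgue (\<Union>i\<in>Iset. rbox i)"
      using cover U by (intro measure_mono_fmeasurable) auto
    then show ?thesis using UB by linarith
  next
    case False
    then have "measure lebesgue (FM f f1 a0 d0 M) = 0" by (rule measure_notin_sets)
    then show ?thesis using Cc_pos d0p Mp by simp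
  qed
qed

lemma main_bound':
  "measure lebesgue (FM f f1 a0 d0 M) \<le> 2 * (4 * B0 + 12 * (B2 + 2 * B3 * B1 / c) * (2 + B1 / c)\<^sup>2 + 1) * d0 / (real M)\<^sup>2"
  using main_bound unfolding Cc_def Kc_def Qc_def .

end


theorem theorem2p3:
  fixes f f1 f2 f3 :: "real \<Rightarrow> real"
  assumes d1: "\<And>x. x \<in> {0..1} \<Longrightarrow> (f has_real_derivative f1 x) (at x within {0..1})"
      and d2: "\<And>x. x \<in> {0..1} \<Longrightarrow> (f1 has_real_derivative f2 x) (at x within {0..1})"
      and c2: "continuous_on {0..1} f2"
      and f1_0: "f1 0 \<ge> 0"
      and inf_f2: "\<exists>c>0. \<forall>x\<in>{0..1}. f2 x \<ge> c"
      and d3: "\<And>x. x \<in> {0<..<1} \<Longrightarrow> (f2 has_real_derivative f3 x) (at x)"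
      and f3_bdd: "\<exists>B. \<forall>x\<in>{0<..<1}. \<bar>f3 x\<bar> \<le> B"
      and cond: "\<And>x. x \<in> {0<..<1} \<Longrightarrow> f1 x * f3 x - (f2 x)\<^sup>2 \<le> 0"
  shows "\<exists>C. \<exists>M0. \<forall>M::nat. M \<ge> M0 \<and> 4 dvd M \<longrightarrow>
           (\<forall>a0 d0::real. 1 \<le> a0 \<and> a0 \<le> 2 \<and> 0 < d0 \<and> d0 \<le> 2 - a0 \<longrightarrow>
              measure lebesgue (FM f f1 a0 d0 M) \<le> C * d0 / (real M)\<^sup>2)"
proof -
  obtain c where cpos: "c > 0" and f2c: "\<forall>x\<in>{0..1}. f2 x \<ge> c" using inf_f2 by blast
  obtain B3' where f3b': "\<forall>x\<in>{0<..<1}. \<bar>f3 x\<bar> \<le> B3'" using f3_bdd by blast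
  define B3 where "B3 = max B3' 0"
  have f3b: "\<And>x. x\<in>{0<..<1} \<Longrightarrow> \<bar>f3 x\<bar> \<le> B3" using f3b' unfolding B3_def by (meson max.coboundedI1)
  have fcont: "continuous_on {0..1} f"
    unfolding continuous_on_eq_continuous_within
  proof
    fix x :: real assume "x \<in> {0..1}"
    then show "continuous (at x within {0..1}) f" by (rule DERIV_continuous[OF d1])
  qed
  have f1cont: "continuous_on {0..1} f1"
    unfolding continuous_on_eq_continuous_within
  proof
    fix x :: real assume "x \<in> {0..1}"
    then show "continuous (at x within {0..1}) f1" by (rule DERIV_continuous[OF d2])
  qed
  obtain B0 where B0: "0 \<le> B0" "\<And>x. x \<in> {0..1} \<Longrightarrow> norm (f x) \<le> B0"
    using continuous_on_compact_bound[OF compact_Icc fcont] by blast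
  obtain B1 where B1: "0 \<le> B1" "\<And>x. x \<in> {0..1} \<Longrightarrow> norm (f1 x) \<le> B1"
    using continuous_on_compact_bound[OF compact_Icc f1cont] by blast
  obtain B2 where B2: "0 \<le> B2" "\<And>x. x \<in> {0..1} \<Longrightarrow> norm (f2 x) \<le> B2"
    using continuous_on_compact_bound[OF compact_Icc c2] by blast
  have An: "anal f f1 f2 f3 c B0 B1 B2 B3"
  proof
    show "\<And>x. x \<in> {0..1} \<Longrightarrow> (f has_real_derivative f1 x) (at x within {0..1})" by (rule d1)
    show "\<And>x. x \<in> {0..1} \<Longrightarrow> (f1 has_real_derivative f2 x) (at x within {0..1})" by (rule d2)
    show "continuous_on {0..1} f2" by (rule c2)
    show "f1 0 \<ge> 0" by (rule f1_0)
    show "c > 0" by (rule cpos)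
    show "\<And>x. x\<in>{0..1} \<Longrightarrow> f2 x \<ge> c" using f2c by blast
    show "\<And>x. x \<in> {0<..<1} \<Longrightarrow> (f2 has_real_derivative f3 x) (at x)" by (rule d3)
    show "\<And>x. x\<in>{0<..<1} \<Longrightarrow> \<bar>f3 x\<bar> \<le> B3" by (rule f3b)
    show "\<And>x. x\<in>{0..1} \<Longrightarrow> \<bar>f x\<bar> \<le> B0" using B0 by simp
    show "\<And>x. x\<in>{0..1} \<Longrightarrow> \<bar>f1 x\<bar> \<le> B1" using B1 by simp
    show "\<And>x. x\<in>{0..1} \<Longrightarrow> \<bar>f2 x\<bar> \<le> B2" using B2 by simp
    show "B0 \<ge> 0" "B1 \<ge> 0" "B2 \<ge> 0" "B3 \<ge> 0" using B0 B1 B2 by (auto simp: B3_def)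
  qed
  define C where "C = 2 * (4 * B0 + 12 * (B2 + 2 * B3 * B1 / c) * (2 + B1 / c)\<^sup>2 + 1)"
  define M0 where "M0 = 2 * nat \<lceil>B1 / c\<rceil> + 8"
  show ?thesis
  proof (intro exI allI impI)
    fix M :: nat and a0 d0 :: real
    assume M: "M0 \<le> M \<and> 4 dvd M"
      and a: "1 \<le> a0 \<and> a0 \<le> 2 \<and> 0 < d0 \<and> d0 \<le> 2 - a0"
    have M2m: "M = 2 * (M div 2)" using M by auto
    have mge: "nat \<lceil>B1 / c\<rceil> + 4 \<le> M div 2" using M unfolding M0_def by linarith
    have m4: "4 \<le> M div 2" using mge by linarith
    have mB: "B1 / c \<le> real (M div 2)"
    proof -
      have "B1 / c \<le> real (nat \<lceil>B1 / c\<rceil>)" by linarith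
      also have "\<dots> \<le> real (M div 2)" using mge by linarith
      finally show ?thesis .
    qed
    have large: "B1 * real M \<le> 2 * c * 2 ^ (M div 2)"
    proof -
      have sq: "real (M div 2) ^ 2 \<le> 2 ^ (M div 2)"
        using pow_sq[OF m4] by (metis of_nat_le_iff of_nat_numeral of_nat_power)
      have "B1 * real M = 2 * c * ((B1 / c) * real (M div 2))"
        using cpos M2m by (metis (no_types) nonzero_mult_div_cancel_left less_irrefl of_nat_mult of_nat_numeral times_divide_eq_left mult.assoc mult.left_commute)
      also have "\<dots> \<le> 2 * c * (real (M div 2) * real (M div 2))"
        using mB cpos by (intro mult_left_mono mult_right_mono) auto
      also have "\<dots> \<le> 2 * c * 2 ^ (M div 2)"
        using sq cpos by (intro mult_left_mono) (auto simp: power2_eq_square)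
      finally show ?thesis .
    qed
    have Co: "constr f f1 f2 f3 c B0 B1 B2 B3 M a0 d0"
    proof (rule constr.intro[OF An])
      show "constr_axioms c B1 M a0 d0"
        using M a large m4 by unfold_locales auto
    qed
    show "measure lebesgue (FM f f1 a0 d0 M) \<le> C * d0 / (real M)\<^sup>2"
      using constr.main_bound'[OF Co] unfolding C_def .
  qed
qed


end
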